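(* Let $K$ be a biquadratic bicyclic number field with quadratic subfields $k_1,k_2,k_3$ and let $\eta\in\mathcal{O}_K^\times$. Then $\eta$ can be written $\eta=\rho^2/r$ with $\rho\in\mathcal{O}_K$ and $r\in\mathbb{Q}$ if and only if $\eta\in\mathcal{O}_K^*$. In particular, $\pm(\mathcal{O}_K^\times)^{2}\subseteq\mathcal{O}_K^*$.
   Context: $\mathcal{O}_k^\times$ is the unit group of the ring of integers of a number field $k$. For a quadratic field $k_i$, $\mathcal{O}_{k_i}^*=\{\eta\in\mathcal{O}_{k_i}^\times: N_{k_i/\mathbb{Q}}(\eta)=+1\}$. If $K\subset\mathbb{R}$, $\mathcal{O}_K^*$ is the set of $\eta\in\mathcal{O}_{k_1}^\times\mathcal{O}_{k_2}^\times\mathcal{O}_{k_3}^\times$ that are totally positive or totally negative; if $K\not\subset\mathbb{R}$, $\mathcal{O}_K^*=\mathcal{O}_{k_1}^*\mathcal{O}_{k_2}^*\mathcal{O}_{k_3}^*$. $(\mathcal{O}_K^\times)^2$ denotes the group of squares of units. *)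

theory Defs
  imports Complex_Main "HOL-Computational_Algebra.Polynomial" "HOL-Computational_Algebra.Squarefree"
begin

text \<open>Quadratic field Q(s) inside the complex numbers, where s is a square root of a
  non-square rational.\<close>
definition quad_field :: "complex \<Rightarrow> complex set" where
  "quad_field s = {of_rat x + of_rat y * s | x y. True}"

definition biquad_field :: "int \<Rightarrow> int \<Rightarrow> complex set" where
  "biquad_field a b = {of_rat x + of_rat y * csqrt (of_int a) + of_rat z * csqrt (of_int b)
      + of_rat w * (csqrt (of_int a) * csqrt (of_int b)) | x y z w. True}"

definition ring_of_integers :: "complex set \<Rightarrow> complex set" where
  "ring_of_integers F = {x \<in> F. algebraic_int x}"

definition unit_group :: "complex set \<Rightarrow> complex set" where
  "unit_group F = {x \<in> ring_of_integers F. x \<noteq> 0 \<and> inverse x \<in> ring_of_integers F}"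

definition quad_norm_is :: "complex \<Rightarrow> complex \<Rightarrow> complex \<Rightarrow> bool" where
  "quad_norm_is s \<eta> n \<longleftrightarrow> (\<exists>x y. \<eta> = of_rat x + of_rat y * s \<and>
       n = (of_rat x)\<^sup>2 - (of_rat y)\<^sup>2 * s\<^sup>2)"

definition quad_norm_one_units :: "complex \<Rightarrow> complex set" where
  "quad_norm_one_units s = {\<eta> \<in> unit_group (quad_field s). quad_norm_is s \<eta> 1}"

text \<open>The four embeddings of Q(sqrt a, sqrt b): sqrt a -> e1 sqrt a, sqrt b -> e2 sqrt b.\<close>
definition biquad_conj_is :: "int \<Rightarrow> int \<Rightarrow> complex \<Rightarrow> int \<Rightarrow> int \<Rightarrow> complex \<Rightarrow> bool" where
  "biquad_conj_is a b \<eta> e1 e2 c \<longleftrightarrow> (\<exists>x y z w.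
      \<eta> = of_rat x + of_rat y * csqrt (of_int a) + of_rat z * csqrt (of_int b)
          + of_rat w * (csqrt (of_int a) * csqrt (of_int b)) \<and>
      c = of_rat x + of_int e1 * of_rat y * csqrt (of_int a) + of_int e2 * of_rat z * csqrt (of_int b)
          + of_int (e1 * e2) * of_rat w * (csqrt (of_int a) * csqrt (of_int b)))"

definition totally_positive :: "int \<Rightarrow> int \<Rightarrow> complex \<Rightarrow> bool" where
  "totally_positive a b \<eta> \<longleftrightarrow> (\<forall>e1\<in>{1,-1}. \<forall>e2\<in>{1,-1}. \<forall>c.
      biquad_conj_is a b \<eta> e1 e2 c \<longrightarrow> c \<in> \<real> \<and> Re c > 0)"

definition totally_negative :: "int \<Rightarrow> int \<Rightarrow> complex \<Rightarrow> bool" where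
  "totally_negative a b \<eta> \<longleftrightarrow> (\<forall>e1\<in>{1,-1}. \<forall>e2\<in>{1,-1}. \<forall>c.
      biquad_conj_is a b \<eta> e1 e2 c \<longrightarrow> c \<in> \<real> \<and> Re c < 0)"

definition set_prod3 :: "complex set \<Rightarrow> complex set \<Rightarrow> complex set \<Rightarrow> complex set" where
  "set_prod3 A B C = {u * v * w | u v w. u \<in> A \<and> v \<in> B \<and> w \<in> C}"

text \<open>The group O_K^* of the paper, for K = Q(sqrt a, sqrt b),
  k1 = Q(sqrt a), k2 = Q(sqrt b), k3 = Q(sqrt a sqrt b) = Q(sqrt(ab)).\<close>
definition OK_star :: "int \<Rightarrow> int \<Rightarrow> complex set" where
  "OK_star a b =
    (let s1 = csqrt (of_int a); s2 = csqrt (of_int b); s3 = s1 * s2 in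
     if biquad_field a b \<subseteq> \<real> then
       {\<eta> \<in> set_prod3 (unit_group (quad_field s1)) (unit_group (quad_field s2)) (unit_group (quad_field s3)).
          totally_positive a b \<eta> \<or> totally_negative a b \<eta>}
     else set_prod3 (quad_norm_one_units s1) (quad_norm_one_units s2) (quad_norm_one_units s3))"

end

theory Submission
  imports Defs "Jordan_Normal_Form.Char_Poly"
begin

definition zspan :: "complex set \<Rightarrow> complex set" where
  "zspan S = {\<Sum>g\<in>S. of_int (c g) * g | c. True}"

lemma eigen_alg_int:
  fixes z :: complex and S :: "complex set"
  assumes fin: "finite S" and one: "1 \<in> S" and cl: "\<forall>s\<in>S. z * s \<in> zspan S"
  shows "algebraic_int z"
proof -
  obtain gs where gs: "distinct gs" "set gs = S" using finite_distinct_list[OF fin] by blast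
  define n where "n = length gs"
  have "\<forall>i. \<exists>c. i < n \<longrightarrow> z * gs ! i = (\<Sum>g\<in>S. of_int (c g) * g)"
  proof
    fix i show "\<exists>c. i < n \<longrightarrow> z * gs ! i = (\<Sum>g\<in>S. of_int (c g) * g)"
    proof (cases "i < n")
      case True
      then have "gs ! i \<in> S" using gs n_def by auto
      then show ?thesis using cl unfolding zspan_def by blast
    qed auto
  qed
  then obtain C where C: "\<And>i. i < n \<Longrightarrow> z * gs ! i = (\<Sum>g\<in>S. of_int (C i g) * g)"
    by metis
  define M :: "int mat" where "M = mat n n (\<lambda>(i,j). C i (gs ! j))"
  define A :: "complex mat" where "A = map_mat of_int M"
  define v :: "complex vec" where "v = vec n (\<lambda>i. gs ! i)"
  have M: "M \<in> carrier_mat n n" unfolding M_def by auto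
  have Ac: "A \<in> carrier_mat n n" unfolding A_def using M by auto
  have sumS: "(\<Sum>g\<in>S. f g) = (\<Sum>j = 0..<n. f (gs ! j))" for f :: "complex \<Rightarrow> complex"
  proof -
    have "(\<Sum>g\<in>S. f g) = sum_list (map f gs)"
      using gs by (simp add: sum_list_distinct_conv_sum_set)
    also have "\<dots> = (\<Sum>j = 0..<n. f (gs ! j))"
      unfolding n_def by (simp add: sum_list_sum_nth)
    finally show ?thesis .
  qed
  have Av: "A *\<^sub>v v = z \<cdot>\<^sub>v v"
  proof (rule eq_vecI)
    show "dim_vec (A *\<^sub>v v) = dim_vec (z \<cdot>\<^sub>v v)" using Ac by (simp add: v_def)
    fix i assume "i < dim_vec (z \<cdot>\<^sub>v v)"
    then have i: "i < n" by (simp add: v_def)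
    have "(A *\<^sub>v v) $ i = row A i \<bullet> v" using Ac i by simp
    also have "\<dots> = (\<Sum>j = 0..<n. of_int (C i (gs ! j)) * gs ! j)"
      unfolding scalar_prod_def using i by (simp add: v_def A_def M_def)
    also have "\<dots> = z * gs ! i" using C[OF i] sumS by simp
    also have "\<dots> = (z \<cdot>\<^sub>v v) $ i" using i by (simp add: v_def)
    finally show "(A *\<^sub>v v) $ i = (z \<cdot>\<^sub>v v) $ i" .
  qed
  have "v \<noteq> 0\<^sub>v n"
  proof
    assume "v = 0\<^sub>v n"
    from one gs obtain j where j: "j < n" "gs ! j = 1" unfolding n_def by (metis in_set_conv_nth)
    then have "v $ j = 1" by (simp add: v_def)
    with \<open>v = 0\<^sub>v n\<close> j show False by simp
  qed
  then have "eigenvector A v z" unfolding eigenvector_def using Av Ac by (auto simp: v_def)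
  then have "eigenvalue A z" unfolding eigenvalue_def by blast
  then have "poly (char_poly A) z = 0" using eigenvalue_root_char_poly[OF Ac] by simp
  moreover have "char_poly A = map_poly of_int (char_poly M)"
    unfolding A_def by (rule of_int_hom.char_poly_hom[OF M])
  moreover have "lead_coeff (char_poly M) = 1" using degree_monic_char_poly[OF M] by simp
  ultimately show ?thesis unfolding algebraic_int_altdef_ipoly by auto
qed



lemma zspan_mem: "finite S \<Longrightarrow> s \<in> S \<Longrightarrow> s \<in> zspan S"
  unfolding zspan_def
proof -
  assume "finite S" "s \<in> S"
  have "(\<Sum>g\<in>S. of_int (if g = s then 1 else 0) * g) = (\<Sum>g\<in>S. if g = s then s else 0)"
    by (rule sum.cong) auto
  also have "\<dots> = s" using \<open>finite S\<close> \<open>s \<in> S\<close> by simp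
  finally have "(\<Sum>g\<in>S. of_int (if g = s then 1 else 0) * g) = s" .
  then show "s \<in> {\<Sum>g\<in>S. of_int (c g) * g |c. True}"
    by (intro CollectI exI[of _ "\<lambda>g. if g = s then (1::int) else 0"]) simp
qed

lemma zspan_add: "x \<in> zspan S \<Longrightarrow> y \<in> zspan S \<Longrightarrow> x + y \<in> zspan S"
  unfolding zspan_def
proof clarify
  fix c d
  have "(\<Sum>g\<in>S. of_int (c g) * g) + (\<Sum>g\<in>S. of_int (d g) * g) = (\<Sum>g\<in>S. of_int (c g + d g) * g)"
    by (simp add: sum.distrib distrib_right)
  then show "\<exists>e. (\<Sum>g\<in>S. of_int (c g) * g) + (\<Sum>g\<in>S. of_int (d g) * g) = (\<Sum>g\<in>S. of_int (e g) * g) \<and> True"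
    by (intro exI[of _ "\<lambda>g. c g + d g"]) simp
qed

lemma zspan_smult: "x \<in> zspan S \<Longrightarrow> of_int k * x \<in> zspan S"
  unfolding zspan_def
proof clarify
  fix c
  have "of_int k * (\<Sum>g\<in>S. of_int (c g) * g) = (\<Sum>g\<in>S. of_int (k * c g) * g)"
    by (simp add: sum_distrib_left mult.assoc)
  then show "\<exists>e. of_int k * (\<Sum>g\<in>S. of_int (c g) * g) = (\<Sum>g\<in>S. of_int (e g) * g) \<and> True"
    by (intro exI[of _ "\<lambda>g. k * c g"]) simp
qed

lemma zspan_zero: "0 \<in> zspan S"
  unfolding zspan_def by (intro CollectI exI[of _ "\<lambda>g. (0::int)"]) simp

lemma zspan_sum: "finite I \<Longrightarrow> (\<And>i. i \<in> I \<Longrightarrow> f i \<in> zspan S) \<Longrightarrow> (\<Sum>i\<in>I. f i) \<in> zspan S"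
  by (induction I rule: finite_induct) (auto intro: zspan_add zspan_zero)

lemma zspan_mult_closed:
  assumes "\<forall>s\<in>S. w * s \<in> zspan S" "t \<in> zspan S"
  shows "w * t \<in> zspan S"
proof -
  from assms(2) obtain c where t: "t = (\<Sum>g\<in>S. of_int (c g) * g)" unfolding zspan_def by auto
  have "w * t = (\<Sum>g\<in>S. of_int (c g) * (w * g))" unfolding t
    by (simp add: sum_distrib_left algebra_simps)
  also have "\<dots> \<in> zspan S"
  proof (cases "finite S")
    case True
    then show ?thesis using assms(1) by (intro zspan_sum zspan_smult) auto
  next
    case False then show ?thesis using zspan_zero by simp
  qed
  finally show ?thesis .
qed

lemma alg_int_poly:
  assumes "algebraic_int (x::complex)"
  obtains p where "lead_coeff p = 1" "\<forall>i. coeff p i \<in> \<int>" "poly p x = 0" "degree p > 0"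
proof -
  from assms obtain p where p: "lead_coeff p = 1" "\<forall>i. coeff p i \<in> \<int>" "poly p x = 0"
    by (auto simp: algebraic_int.simps)
  have "degree p > 0"
  proof (rule ccontr)
    assume "\<not> degree p > 0"
    then have "degree p = 0" by simp
    then have "p = [:lead_coeff p:]" by (metis degree_0_id)
    with p show False by (metis one_neq_zero poly_pCons mult_zero_right add.right_neutral pCons_0_0 poly_0)
  qed
  with p that show ?thesis by blast
qed

lemma power_reduce:
  assumes p: "lead_coeff p = 1" "\<forall>i. coeff p i \<in> \<int>" "poly p (x::complex) = 0"
  shows "\<exists>c. x ^ degree p = (\<Sum>l<degree p. of_int (c l) * x ^ l)"
proof -
  have "\<forall>l. \<exists>k. coeff p l = of_int k" using p(2) by (metis Ints_cases)
  then obtain c where c: "\<And>l. coeff p l = of_int (c l)" by metis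
  have "0 = (\<Sum>l\<le>degree p. coeff p l * x ^ l)" using p(3) by (simp add: poly_altdef)
  also have "\<dots> = (\<Sum>l<degree p. coeff p l * x ^ l) + x ^ degree p"
    using p(1) by (simp add: lessThan_Suc_atMost[symmetric])
  finally have "x ^ degree p = (\<Sum>l<degree p. of_int (- c l) * x ^ l)"
    by (simp add: c sum_negf eq_neg_iff_add_eq_0 add.commute)
  then show ?thesis by (rule exI[of _ "\<lambda>l. - c l"])
qed

lemma alg_int_add_mult:
  assumes "algebraic_int (x::complex)" "algebraic_int y"
  shows "algebraic_int (x + y) \<and> algebraic_int (x * y)"
proof -
  obtain p where p: "lead_coeff p = 1" "\<forall>i. coeff p i \<in> \<int>" "poly p x = 0" "degree p > 0"
    using alg_int_poly[OF assms(1)] by blast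
  obtain q where q: "lead_coeff q = 1" "\<forall>i. coeff q i \<in> \<int>" "poly q y = 0" "degree q > 0"
    using alg_int_poly[OF assms(2)] by blast
  define m where "m = degree p"
  define n where "n = degree q"
  obtain c where c: "x ^ m = (\<Sum>l<m. of_int (c l) * x ^ l)" using power_reduce[OF p(1-3)] m_def by blast
  obtain d where d: "y ^ n = (\<Sum>l<n. of_int (d l) * y ^ l)" using power_reduce[OF q(1-3)] n_def by blast
  define S where "S = (\<lambda>(i,j). x ^ i * y ^ j) ` ({..<m} \<times> {..<n})"
  have fin: "finite S" unfolding S_def by auto
  have one: "1 \<in> S" unfolding S_def using p(4) q(4) m_def n_def
    by (auto intro!: image_eqI[where x="(0,0)"])
  have memS: "i < m \<Longrightarrow> j < n \<Longrightarrow> x ^ i * y ^ j \<in> zspan S" for i j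
    using zspan_mem[OF fin] unfolding S_def by auto
  have clx: "\<forall>s\<in>S. x * s \<in> zspan S"
  proof
    fix s assume "s \<in> S"
    then obtain i j where ij: "i < m" "j < n" "s = x ^ i * y ^ j" unfolding S_def by auto
    show "x * s \<in> zspan S"
    proof (cases "Suc i < m")
      case True
      then show ?thesis using memS[of "Suc i" j] ij by (simp add: mult.assoc)
    next
      case False
      then have "Suc i = m" using ij by simp
      have "x * s = x ^ (Suc i) * y ^ j" using ij by (simp add: mult.assoc)
      then have "x * s = x ^ m * y ^ j" using \<open>Suc i = m\<close> by simp
      also have "\<dots> = (\<Sum>l<m. of_int (c l) * (x ^ l * y ^ j))"
        unfolding c by (simp add: sum_distrib_right mult.assoc)
      also have "\<dots> \<in> zspan S" using ij memS by (intro zspan_sum zspan_smult) auto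
      finally show ?thesis .
    qed
  qed
  have cly: "\<forall>s\<in>S. y * s \<in> zspan S"
  proof
    fix s assume "s \<in> S"
    then obtain i j where ij: "i < m" "j < n" "s = x ^ i * y ^ j" unfolding S_def by auto
    show "y * s \<in> zspan S"
    proof (cases "Suc j < n")
      case True
      then show ?thesis using memS[of i "Suc j"] ij by (simp add: algebra_simps)
    next
      case False
      then have "Suc j = n" using ij by simp
      have "y * s = x ^ i * y ^ (Suc j)" using ij by (simp add: algebra_simps)
      then have "y * s = x ^ i * y ^ n" using \<open>Suc j = n\<close> by simp
      also have "\<dots> = (\<Sum>l<n. of_int (d l) * (x ^ i * y ^ l))"
        unfolding d by (simp add: sum_distrib_left algebra_simps)
      also have "\<dots> \<in> zspan S" using ij memS by (intro zspan_sum zspan_smult) auto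
      finally show ?thesis .
    qed
  qed
  have "\<forall>s\<in>S. (x + y) * s \<in> zspan S"
    using clx cly by (auto simp: distrib_right intro: zspan_add)
  moreover have "\<forall>s\<in>S. (x * y) * s \<in> zspan S"
  proof
    fix s assume s: "s \<in> S"
    have "(x * y) * s = x * (y * s)" by (simp add: mult.assoc)
    also have "\<dots> \<in> zspan S" using zspan_mult_closed[OF clx] cly s by blast
    finally show "(x * y) * s \<in> zspan S" .
  qed
  ultimately show ?thesis using eigen_alg_int[OF fin one] by blast
qed

lemma alg_int_add: "algebraic_int (x::complex) \<Longrightarrow> algebraic_int y \<Longrightarrow> algebraic_int (x + y)"
  using alg_int_add_mult by blast
lemma alg_int_mult: "algebraic_int (x::complex) \<Longrightarrow> algebraic_int y \<Longrightarrow> algebraic_int (x * y)"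
  using alg_int_add_mult by blast
lemma alg_int_diff: "algebraic_int (x::complex) \<Longrightarrow> algebraic_int y \<Longrightarrow> algebraic_int (x - y)"
  using alg_int_add[of x "-y"] by simp
lemma alg_int_power: "algebraic_int (x::complex) \<Longrightarrow> algebraic_int (x ^ n)"
  by (induction n) (auto intro: alg_int_mult)

lemma alg_int_sqrt_of:
  assumes "algebraic_int ((x::complex)^2)" shows "algebraic_int x"
  by (rule algebraic_int_root[OF assms, of "monom 1 2"]) (auto simp: poly_monom coeff_monom degree_monom_eq)

lemma rat_alg_int_unit:
  assumes "algebraic_int (of_rat q :: complex)" "algebraic_int (of_rat (inverse q) :: complex)" "q \<noteq> 0"
  shows "q = 1 \<or> q = -1"
proof -
  have "(of_rat q :: complex) \<in> \<int>" using rational_algebraic_int_is_int[OF assms(1)] by auto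
  then obtain k where k: "(of_rat q :: complex) = of_int k" by (metis Ints_cases)
  have "(of_rat (inverse q) :: complex) \<in> \<int>" using rational_algebraic_int_is_int[OF assms(2)] by auto
  then obtain l where l: "(of_rat (inverse q) :: complex) = of_int l" by (metis Ints_cases)
  have kq: "q = of_int k" using k by (metis of_rat_eq_iff of_rat_of_int_eq)
  have lq: "inverse q = of_int l" using l by (metis of_rat_eq_iff of_rat_of_int_eq)
  have "q * inverse q = 1" using assms(3) by simp
  then have "of_int (k * l) = (1::rat)" using kq lq by simp
  then have "k * l = 1" by (simp only: of_int_eq_1_iff)
  then show ?thesis using kq by (auto simp: zmult_eq_1_iff)
qed



lemma E_mult_abs:
  fixes A B al be x y u w x' y' u' w' :: "'a::comm_ring_1"
  assumes "A * A = al" "B * B = be"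
  shows "(x + y * A + u * B + w * (A * B)) * (x' + y' * A + u' * B + w' * (A * B)) =
  (x*x' + al * y*y' + be * u*u' + al * be * w*w') +
    (x*y' + y*x' + be * (u*w' + w*u')) * A +
    (x*u' + u*x' + al * (y*w' + w*y')) * B +
    (x*w' + w*x' + y*u' + u*y') * (A * B)"
proof -
  have "(x + y * A + u * B + w * (A * B)) * (x' + y' * A + u' * B + w' * (A * B)) =
     x*x' + (A*A) * y*y' + (B*B) * u*u' + (A*A) * (B*B) * w*w' +
    (x*y' + y*x' + (B*B) * (u*w' + w*u')) * A +
    (x*u' + u*x' + (A*A) * (y*w' + w*y')) * B +
    (x*w' + w*x' + y*u' + u*y') * (A * B)" by (simp add: algebra_simps)
  then show ?thesis using assms by simp
qed

lemma lin_aux: "(p::'a::comm_ring_1) + d*A + q*B = 0 \<Longrightarrow> A*d = -p + -q*B"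
proof -
  assume h: "p + d*A + q*B = 0"
  have "A*d = (p + d*A + q*B) - p - q*B" by (simp add: algebra_simps)
  then show ?thesis using h by simp
qed

lemma rat_sq_int:
  assumes "(of_rat q :: complex)^2 = of_int n"
  shows "\<exists>k. q = of_int k \<and> k^2 = n"
proof -
  have "algebraic_int ((of_rat q :: complex)^2)" using assms by simp
  then have "algebraic_int (of_rat q :: complex)" by (rule alg_int_sqrt_of)
  then have "(of_rat q :: complex) \<in> \<int>" using rational_algebraic_int_is_int[of "of_rat q :: complex"] by auto
  then obtain k where k: "(of_rat q :: complex) = of_int k" by (metis Ints_cases)
  then have kq: "q = of_int k" by (metis of_rat_eq_iff of_rat_of_int_eq)
  have "(of_int (k^2) :: complex) = of_int n" using assms k by simp
  then have "k^2 = n" by (simp only: of_int_eq_iff)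
  with kq show ?thesis by blast
qed

lemma sqf_not_sq:
  assumes "squarefree (n::int)" "n \<noteq> 1"
  shows "(of_rat q :: complex)^2 \<noteq> of_int n"
proof
  assume "(of_rat q :: complex)^2 = of_int n"
  then obtain k where "k^2 = n" using rat_sq_int by blast
  then have "k dvd 1" using squarefreeD[OF assms(1), of k] by simp
  then have "k = 1 \<or> k = -1" by auto
  with \<open>k^2 = n\<close> assms(2) show False by auto
qed

lemma sqf_prod_not_sq:
  assumes a: "squarefree (a::int)" and b: "squarefree b" and ab: "a \<noteq> b"
  shows "(of_rat q :: complex)^2 \<noteq> of_int (a*b)"
proof
  assume "(of_rat q :: complex)^2 = of_int (a*b)"
  then obtain k where k: "k^2 = a*b" using rat_sq_int by blast
  have a0: "a \<noteq> 0" and b0: "b \<noteq> 0" using a b by auto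
  then have k0: "k \<noteq> 0" using k by auto
  have "multiplicity p a = multiplicity p b" if p: "prime p" for p
  proof -
    have pe: "prime_elem p" using p unfolding prime_def by blast
    have e1: "multiplicity p (a*b) = multiplicity p a + multiplicity p b"
      using prime_elem_multiplicity_mult_distrib[OF pe a0 b0] .
    have e2: "multiplicity p (k^2) = 2 * multiplicity p k"
      using prime_elem_multiplicity_power_distrib[OF pe k0] .
    have "\<forall>p. prime p \<longrightarrow> multiplicity p a \<le> 1" using squarefree_factorial_semiring''[OF a0] a by blast
    then have l1: "multiplicity p a \<le> 1" using p by blast
    have "\<forall>p. prime p \<longrightarrow> multiplicity p b \<le> 1" using squarefree_factorial_semiring''[OF b0] b by blast
    then have l2: "multiplicity p b \<le> 1" using p by blast
    have "multiplicity p a + multiplicity p b = 2 * multiplicity p k" using e1 e2 k by simp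
    then show ?thesis using l1 l2 by presburger
  qed
  then have "normalize a = normalize b" using multiplicity_eq_imp_eq[OF a0 b0] by blast
  then have "\<bar>a\<bar> = \<bar>b\<bar>" by simp
  then have "b = -a" using ab by auto
  then have "k^2 = - (a^2)" using k by (simp add: power2_eq_square)
  moreover have "a^2 > 0" using a0 by simp
  moreover have "k^2 \<ge> 0" by simp
  ultimately show False by linarith
qed

locale biq =
  fixes a b :: int
  assumes sfa: "squarefree a" and sfb: "squarefree b" and a1: "a \<noteq> 1" and b1: "b \<noteq> 1"
    and anb: "a \<noteq> b"
begin

definition A :: complex where "A = csqrt (of_int a)"
definition B :: complex where "B = csqrt (of_int b)"
definition E :: "rat \<Rightarrow> rat \<Rightarrow> rat \<Rightarrow> rat \<Rightarrow> complex" where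
  "E x y u w = of_rat x + of_rat y * A + of_rat u * B + of_rat w * (A * B)"

abbreviation K where "K \<equiv> biquad_field a b"

lemma AA: "A * A = of_int a" unfolding A_def by (metis power2_csqrt power2_eq_square)
lemma BB: "B * B = of_int b" unfolding B_def by (metis power2_csqrt power2_eq_square)

lemma K_iff: "z \<in> K \<longleftrightarrow> (\<exists>x y u w. z = E x y u w)"
  unfolding biquad_field_def E_def A_def B_def by blast

lemma E_in_K [simp]: "E x y u w \<in> K" using K_iff by blast

lemma E_mult: "E x y u w * E x' y' u' w' =
  E (x*x' + of_int a * y*y' + of_int b * u*u' + of_int a * of_int b * w*w')
    (x*y' + y*x' + of_int b * (u*w' + w*u'))
    (x*u' + u*x' + of_int a * (y*w' + w*y'))
    (x*w' + w*x' + y*u' + u*y')"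
proof -
  have AA': "A * A = of_rat (of_int a)" using AA by simp
  have BB': "B * B = of_rat (of_int b)" using BB by simp
  show ?thesis unfolding E_def of_rat_add of_rat_mult by (rule E_mult_abs[OF AA' BB'])
qed

lemma E_add: "E x y u w + E x' y' u' w' = E (x+x') (y+y') (u+u') (w+w')"
  unfolding E_def of_rat_add by (simp add: algebra_simps)
lemma E_diff: "E x y u w - E x' y' u' w' = E (x-x') (y-y') (u-u') (w-w')"
  unfolding E_def of_rat_diff by (simp add: algebra_simps)
lemma E_minus: "- E x y u w = E (-x) (-y) (-u) (-w)"
  unfolding E_def of_rat_minus by (simp add: algebra_simps)
lemma E_rat: "of_rat q = E q 0 0 0" unfolding E_def by simp
lemma E_0: "E 0 0 0 0 = 0" unfolding E_def by simp
lemma E_1: "E 1 0 0 0 = 1" unfolding E_def by simp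

lemma B_irr: "B \<noteq> of_rat q"
proof
  assume "B = of_rat q"
  then have "(of_rat q :: complex)^2 = of_int b" using BB by (simp add: power2_eq_square)
  then show False using sqf_not_sq[OF sfb b1] by blast
qed

lemma A_not_in_QB: "A \<noteq> of_rat p + of_rat q * B"
proof
  assume h: "A = of_rat p + of_rat q * B"
  have "of_int a = (of_rat p + of_rat q * B) * (of_rat p + of_rat q * B)" using AA h by simp
  also have "\<dots> = of_rat (p*p + q*q*of_int b) + of_rat (2*p*q) * B"
    using BB by (simp add: of_rat_add of_rat_mult algebra_simps)
  finally have eq: "of_int a = of_rat (p*p + q*q*of_int b) + of_rat (2*p*q) * B" .
  show False
  proof (cases "p = 0")
    case True
    then have "of_int a = (of_rat (q*q*of_int b) :: complex)" using eq by simp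
    then have "(of_rat (q * of_int b) :: complex)^2 = of_int (a*b)"
      by (simp add: power2_eq_square of_rat_mult algebra_simps)
    then show False using sqf_prod_not_sq[OF sfa sfb anb] by blast
  next
    case p0: False
    show False
    proof (cases "q = 0")
      case True
      then have "(of_rat p :: complex)^2 = of_int a" using eq by (simp add: power2_eq_square of_rat_mult)
      then show False using sqf_not_sq[OF sfa a1] by blast
    next
      case False
      then have "2*p*q \<noteq> 0" using p0 by simp
      then have "B = of_rat ((of_int a - (p*p + q*q*of_int b)) / (2*p*q))"
        using eq by (simp add: of_rat_divide of_rat_diff field_simps)
      then show False using B_irr by blast
    qed
  qed
qed

lemma E_zero: assumes "E x y u w = 0" shows "x = 0 \<and> y = 0 \<and> u = 0 \<and> w = 0"
proof -
  have yw: "y = 0 \<and> w = 0"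
  proof (rule ccontr)
    assume nz: "\<not> (y = 0 \<and> w = 0)"
    define D where "D = y*y - w*w*of_int b"
    have D0: "D \<noteq> 0"
    proof
      assume "D = 0"
      show False
      proof (cases "w = 0")
        case True then show False using \<open>D = 0\<close> nz by (simp add: D_def)
      next
        case False
        then have "(y/w)*(y/w) = of_int b" using \<open>D = 0\<close> by (simp add: D_def field_simps)
        then have "(of_rat (y/w) :: complex)^2 = of_int b"
          by (metis of_rat_mult of_rat_of_int_eq power2_eq_square)
        then show False using sqf_not_sq[OF sfb b1] by blast
      qed
    qed
    have "0 = E x y u w * E y 0 (-w) 0" using assms by simp
    also have "\<dots> = E (x*y - u*w*of_int b) D (u*y - x*w) 0"
      unfolding E_mult D_def by (simp add: algebra_simps)
    finally have h0: "of_rat (x*y - u*w*of_int b) + of_rat D * A + of_rat (u*y - x*w) * B = 0"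
      unfolding E_def by simp
    define X where "X = (of_rat (-(x*y - u*w*of_int b)) :: complex)"
    define Y where "Y = (of_rat (-(u*y - x*w)) :: complex)"
    define d where "d = (of_rat D :: complex)"
    have d0: "d \<noteq> 0" using D0 by (simp add: d_def)
    have h1: "A * d = X + Y * B" using lin_aux[OF h0] unfolding X_def Y_def d_def of_rat_minus .
    have "A = (A * d) / d" using d0 by simp
    also have "\<dots> = X / d + (Y / d) * B" using h1 by (simp add: add_divide_distrib)
    also have "\<dots> = of_rat (- (x*y - u*w*of_int b) / D) + of_rat (- (u*y - x*w) / D) * B"
      by (simp add: X_def Y_def d_def of_rat_divide)
    finally have "A = of_rat (- (x*y - u*w*of_int b) / D) + of_rat (- (u*y - x*w) / D) * B" .
    then show False using A_not_in_QB by blast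
  qed
  then have "of_rat x + of_rat u * B = 0" using assms by (simp add: E_def)
  then have u: "u = 0"
  proof -
    assume h: "of_rat x + of_rat u * B = 0"
    show "u = 0"
    proof (rule ccontr)
      assume "u \<noteq> 0"
      have h': "of_rat u * B = - of_rat x" using h by (simp add: eq_neg_iff_add_eq_0 add.commute)
      have "B = (of_rat u * B) / of_rat u" using \<open>u \<noteq> 0\<close> by simp
      also have "\<dots> = of_rat (- x / u)" unfolding h' by (simp add: of_rat_divide of_rat_minus)
      finally have "B = of_rat (- x / u)" .
      then show False using B_irr by blast
    qed
  qed
  then have "x = 0" using \<open>of_rat x + of_rat u * B = 0\<close> by simp
  with yw u show ?thesis by simp
qed

lemma E_inj: "E x y u w = E x' y' u' w' \<longleftrightarrow> x = x' \<and> y = y' \<and> u = u' \<and> w = w'"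
proof
  assume "E x y u w = E x' y' u' w'"
  then have "E (x-x') (y-y') (u-u') (w-w') = 0" using E_diff by (metis right_minus_eq)
  from E_zero[OF this] show "x = x' \<and> y = y' \<and> u = u' \<and> w = w'" by simp
qed simp

end


context biq begin

definition sg :: "int \<Rightarrow> int \<Rightarrow> complex \<Rightarrow> complex" where
  "sg e1 e2 z = (THE c. \<exists>x y u w. z = E x y u w \<and>
      c = E x (of_int e1 * y) (of_int e2 * u) (of_int (e1*e2) * w))"

lemma sg_E: "sg e1 e2 (E x y u w) = E x (of_int e1 * y) (of_int e2 * u) (of_int (e1*e2) * w)"
  unfolding sg_def by (rule the_equality) (auto simp: E_inj)

lemma K_cases: assumes "z \<in> K" obtains x y u w where "z = E x y u w"
  using assms K_iff by blast

lemma conj_is_iff: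
  assumes "z \<in> K"
  shows "biquad_conj_is a b z e1 e2 c \<longleftrightarrow> c = sg e1 e2 z"
proof -
  have "biquad_conj_is a b z e1 e2 c \<longleftrightarrow> (\<exists>x y u w. z = E x y u w \<and>
      c = E x (of_int e1 * y) (of_int e2 * u) (of_int (e1*e2) * w))"
    unfolding biquad_conj_is_def E_def A_def B_def by (simp add: of_rat_mult mult.assoc)
  also have "\<dots> \<longleftrightarrow> c = sg e1 e2 z"
    using assms by (auto elim!: K_cases simp: E_inj sg_E)
  finally show ?thesis .
qed

lemma K_mult: "z \<in> K \<Longrightarrow> w \<in> K \<Longrightarrow> z * w \<in> K"
  by (auto elim!: K_cases simp: E_mult)
lemma K_add: "z \<in> K \<Longrightarrow> w \<in> K \<Longrightarrow> z + w \<in> K"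
  by (auto elim!: K_cases simp: E_add)
lemma K_diff: "z \<in> K \<Longrightarrow> w \<in> K \<Longrightarrow> z - w \<in> K"
  by (auto elim!: K_cases simp: E_diff)
lemma K_minus: "z \<in> K \<Longrightarrow> - z \<in> K"
  by (auto elim!: K_cases simp: E_minus)
lemma K_rat: "of_rat q \<in> K" by (simp add: E_rat)
lemma K_1: "1 \<in> K" using K_rat[of 1] by simp
lemma K_0: "0 \<in> K" using K_rat[of 0] by simp
lemma K_int: "of_int k \<in> K" using K_rat[of "of_int k"] by simp
lemma K_power: "z \<in> K \<Longrightarrow> z ^ n \<in> K"
  by (induction n) (auto intro: K_mult K_1)

lemma sg_mult:
  assumes "z \<in> K" "w \<in> K" "e1 \<in> {1,-1}" "e2 \<in> {1,-1}"
  shows "sg e1 e2 (z * w) = sg e1 e2 z * sg e1 e2 w"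
  using assms by (auto elim!: K_cases simp: E_mult sg_E E_inj algebra_simps)

lemma sg_add: "z \<in> K \<Longrightarrow> w \<in> K \<Longrightarrow> sg e1 e2 (z + w) = sg e1 e2 z + sg e1 e2 w"
  by (auto elim!: K_cases simp: E_add sg_E E_inj algebra_simps)
lemma sg_minus: "z \<in> K \<Longrightarrow> sg e1 e2 (- z) = - sg e1 e2 z"
  by (auto elim!: K_cases simp: E_minus sg_E E_inj algebra_simps)
lemma sg_diff: "z \<in> K \<Longrightarrow> w \<in> K \<Longrightarrow> sg e1 e2 (z - w) = sg e1 e2 z - sg e1 e2 w"
  using sg_add[of z "- w" e1 e2] sg_minus[of w e1 e2] K_minus[of w] by simp
lemma sg_rat: "sg e1 e2 (of_rat q) = of_rat q"
  by (simp add: E_rat sg_E)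
lemma sg_1: "sg e1 e2 1 = 1" using sg_rat[of e1 e2 1] by simp
lemma sg_0: "sg e1 e2 0 = 0" using sg_rat[of e1 e2 0] by simp
lemma sg_int: "sg e1 e2 (of_int k) = of_int k" using sg_rat[of e1 e2 "of_int k"] by simp
lemma sg_K: "sg e1 e2 z \<in> K \<or> z \<notin> K"
  by (auto elim!: K_cases simp: sg_E)
lemma sg_K': "z \<in> K \<Longrightarrow> sg e1 e2 z \<in> K" using sg_K by blast
lemma sg_11: "z \<in> K \<Longrightarrow> sg 1 1 z = z"
  by (auto elim!: K_cases simp: sg_E)
lemma sg_comp: "z \<in> K \<Longrightarrow> sg e1 e2 (sg f1 f2 z) = sg (e1*f1) (e2*f2) z"
  by (auto elim!: K_cases simp: sg_E E_inj algebra_simps)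
lemma sg_zero_iff:
  assumes "z \<in> K" "e1 \<in> {1,-1}" "e2 \<in> {1,-1}"
  shows "sg e1 e2 z = 0 \<longleftrightarrow> z = 0"
  using assms by (auto elim!: K_cases simp: sg_E E_0[symmetric] E_inj)

lemma sg_power:
  assumes "z \<in> K" "e1 \<in> {1,-1}" "e2 \<in> {1,-1}"
  shows "sg e1 e2 (z ^ n) = sg e1 e2 z ^ n"
  by (induction n) (auto simp: sg_1 sg_mult[OF assms(1) K_power[OF assms(1)] assms(2,3)])

lemma sg_poly:
  assumes "z \<in> K" "e1 \<in> {1,-1}" "e2 \<in> {1,-1}"
  shows "(\<forall>i. coeff p i \<in> \<int>) \<Longrightarrow> poly p z \<in> K \<and> sg e1 e2 (poly p z) = poly p (sg e1 e2 z)"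
proof (induction p)
  case 0
  then show ?case by (simp add: K_0 sg_0)
next
  case (pCons c p)
  have c: "c \<in> \<int>" using pCons.prems by (metis coeff_pCons_0)
  have "\<forall>i. coeff p i \<in> \<int>" using pCons.prems by (metis coeff_pCons_Suc)
  with pCons.IH have IH: "poly p z \<in> K" "sg e1 e2 (poly p z) = poly p (sg e1 e2 z)" by auto
  from c obtain k where k: "c = of_int k" by (metis Ints_cases)
  have cK: "c \<in> K" using k K_int by simp
  have "poly (pCons c p) z = c + z * poly p z" by simp
  moreover have "c + z * poly p z \<in> K" using cK IH assms by (intro K_add K_mult) auto
  moreover have "sg e1 e2 (c + z * poly p z) = c + sg e1 e2 z * poly p (sg e1 e2 z)"
    using cK IH assms by (simp add: sg_add K_mult sg_mult k sg_int)
  ultimately show ?case by simp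
qed

lemma sg_alg_int:
  assumes "z \<in> K" "algebraic_int z" "e1 \<in> {1,-1}" "e2 \<in> {1,-1}"
  shows "algebraic_int (sg e1 e2 z)"
proof -
  from assms(2) obtain p where p: "lead_coeff p = 1" "\<forall>i. coeff p i \<in> \<int>" "poly p z = 0"
    by (auto simp: algebraic_int.simps)
  have "poly p (sg e1 e2 z) = sg e1 e2 (poly p z)" using sg_poly[OF assms(1,3,4) p(2)] by simp
  also have "\<dots> = 0" using p(3) sg_0 by simp
  finally show ?thesis using p by (auto intro: algebraic_int.intros)
qed

lemma sg_inverse:
  assumes "z \<in> K" "inverse z \<in> K" "e1 \<in> {1,-1}" "e2 \<in> {1,-1}"
  shows "sg e1 e2 (inverse z) = inverse (sg e1 e2 z)"
proof (cases "z = 0")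
  case True then show ?thesis by (simp add: sg_0)
next
  case False
  have "sg e1 e2 z * sg e1 e2 (inverse z) = sg e1 e2 (z * inverse z)"
    using assms by (simp add: sg_mult)
  also have "\<dots> = 1" using False by (simp add: sg_1)
  finally show ?thesis by (metis inverse_unique)
qed

lemma trace_rat:
  assumes "z \<in> K"
  shows "\<exists>q. z + sg (-1) 1 z + sg 1 (-1) z + sg (-1) (-1) z = of_rat q"
proof -
  from assms obtain x y u w where "z = E x y u w" by (rule K_cases)
  then have "z + sg (-1) 1 z + sg 1 (-1) z + sg (-1) (-1) z = of_rat (4*x)"
    by (simp add: sg_E E_add E_rat)
  then show ?thesis by blast
qed

lemma QA: "quad_field A = {z. \<exists>x y. z = E x y 0 0}"
  unfolding quad_field_def E_def by auto
lemma QB: "quad_field B = {z. \<exists>x u. z = E x 0 u 0}"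
  unfolding quad_field_def E_def by auto
lemma QC: "quad_field (A*B) = {z. \<exists>x w. z = E x 0 0 w}"
  unfolding quad_field_def E_def by auto

lemma QA_K: "quad_field A \<subseteq> K" using QA by auto
lemma QB_K: "quad_field B \<subseteq> K" using QB by auto
lemma QC_K: "quad_field (A*B) \<subseteq> K" using QC by auto

lemma fixA: "z \<in> K \<Longrightarrow> sg 1 (-1) z = z \<Longrightarrow> z \<in> quad_field A"
  unfolding QA by (auto elim!: K_cases simp: sg_E E_inj)
lemma fixB: "z \<in> K \<Longrightarrow> sg (-1) 1 z = z \<Longrightarrow> z \<in> quad_field B"
  unfolding QB by (auto elim!: K_cases simp: sg_E E_inj)
lemma fixC: "z \<in> K \<Longrightarrow> sg (-1) (-1) z = z \<Longrightarrow> z \<in> quad_field (A*B)"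
  unfolding QC by (auto elim!: K_cases simp: sg_E E_inj)

lemma a0: "a \<noteq> 0" using sfa by auto
lemma b0: "b \<noteq> 0" using sfb by auto

lemma real_K:
  assumes "a > 0" "b > 0"
  shows "K \<subseteq> \<real>"
proof
  fix z assume "z \<in> K"
  then obtain x y u w where z: "z = E x y u w" by (rule K_cases)
  have "A = of_real (sqrt (of_int a))" unfolding A_def using assms
    by (metis of_real_of_int_eq of_real_sqrt of_int_0_le_iff less_imp_le)
  moreover have "B = of_real (sqrt (of_int b))" unfolding B_def using assms
    by (metis of_real_of_int_eq of_real_sqrt of_int_0_le_iff less_imp_le)
  ultimately have "A \<in> \<real>" "B \<in> \<real>" by auto
  moreover have "of_rat q \<in> (\<real> :: complex set)" for q
  proof (cases q)
    case (Fract n d)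
    then show ?thesis by (simp add: of_rat_rat Reals_divide)
  qed
  ultimately show "z \<in> \<real>" unfolding z E_def by (intro Reals_add Reals_mult) auto
qed

lemma nonreal_K: "\<not> K \<subseteq> \<real> \<Longrightarrow> a < 0 \<or> b < 0"
  using real_K a0 b0 by force

end


lemma key_id:
  fixes u1 v1 u2 v2 u3 v3 s1 s2 s3 :: complex
  assumes h1: "u1*v1 = -1" and h2: "u2*v2 = -1" and h3: "u3*v3 = -1" and "s1*s1 = 1" "s2*s2 = 1" "s3*s3 = 1" and s: "s1*s2*s3 = -1"
  shows "(u1*u2*u3 + s1*u1 + s2*u2 + s3*u3)^2 =
    (u1*u2*u3 + v1*u2*v3 + u1*v2*v3 + v1*v2*u3 + 2*(s1*(u1+v1) + s2*(u2+v2) + s3*(u3+v3))) * (u1*u2*u3)"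
proof -
  have s12: "s1*s2 = -s3" using s \<open>s3*s3 = 1\<close> by (metis mult.assoc mult_minus_left mult_1_right)
  have s13: "s1*s3 = -s2" using s \<open>s2*s2 = 1\<close> by (metis mult.assoc mult.commute mult_minus_left mult_1_right)
  have s23: "s2*s3 = -s1" using s \<open>s1*s1 = 1\<close> by (metis mult.assoc mult.commute mult_minus_left mult_1_right)
  define e where "e = u1*u2*u3"
  have L: "(e + s1*u1 + s2*u2 + s3*u3)^2 = e*e + (s1*s1)*(u1*u1) + (s2*s2)*(u2*u2) + (s3*s3)*(u3*u3)
     + 2*e*(s1*u1 + s2*u2 + s3*u3) + 2*(s1*s2)*(u1*u2) + 2*(s1*s3)*(u1*u3) + 2*(s2*s3)*(u2*u3)"
    by (simp add: power2_eq_square algebra_simps)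
  have R: "(e + v1*u2*v3 + u1*v2*v3 + v1*v2*u3 + 2*(s1*(u1+v1) + s2*(u2+v2) + s3*(u3+v3))) * e
     = e*e + (u1*v1)*(u3*v3)*(u2*u2) + (u2*v2)*(u3*v3)*(u1*u1) + (u1*v1)*(u2*v2)*(u3*u3)
     + 2*e*(s1*u1 + s2*u2 + s3*u3) + 2*s1*(u1*v1)*(u2*u3) + 2*s2*(u2*v2)*(u1*u3) + 2*s3*(u3*v3)*(u1*u2)"
    unfolding e_def by (simp add: algebra_simps)
  show ?thesis unfolding e_def[symmetric] L R using assms s12 s13 s23 by (simp add: algebra_simps)
qed

lemma cplx_of_rat: "(of_rat q :: complex) = of_real (of_rat q)"
  by (cases q) (simp add: of_rat_rat)

context biq begin

lemma O_iff: "z \<in> ring_of_integers F \<longleftrightarrow> z \<in> F \<and> algebraic_int z"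
  unfolding ring_of_integers_def by simp

lemma U_iff: "z \<in> unit_group F \<longleftrightarrow> z \<in> F \<and> algebraic_int z \<and> z \<noteq> 0 \<and> inverse z \<in> F \<and> algebraic_int (inverse z)"
  unfolding unit_group_def ring_of_integers_def by auto

lemma OK_star_eq: "OK_star a b = (if K \<subseteq> \<real> then
   {\<eta> \<in> set_prod3 (unit_group (quad_field A)) (unit_group (quad_field B)) (unit_group (quad_field (A*B))).
          totally_positive a b \<eta> \<or> totally_negative a b \<eta>}
   else set_prod3 (quad_norm_one_units A) (quad_norm_one_units B) (quad_norm_one_units (A*B)))"
  unfolding OK_star_def A_def B_def Let_def by simp

lemma norm_one_rep:
  assumes sub: "quad_field s \<subseteq> K" and u: "u \<in> quad_norm_one_units s"
  shows "\<exists>\<rho> r. \<rho> \<in> K \<and> algebraic_int \<rho> \<and> r \<noteq> 0 \<and> \<rho>^2 = of_rat r * u"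
proof -
  from u have uq: "u \<in> quad_field s" "algebraic_int u"
    unfolding quad_norm_one_units_def unit_group_def ring_of_integers_def by auto
  have uK: "u \<in> K" using uq sub by auto
  from u obtain x y where xy: "u = of_rat x + of_rat y * s" "1 = (of_rat x)^2 - (of_rat y)^2 * s^2"
    unfolding quad_norm_one_units_def quad_norm_is_def by auto
  show ?thesis
  proof (cases "u = -1")
    case True
    then show ?thesis using K_1 by (intro exI[of _ 1] exI[of _ "-1"]) simp
  next
    case False
    define X where "X = (of_rat x :: complex)"
    define Y where "Y = (of_rat y :: complex)"
    have u': "u = X + Y * s" and n1: "X^2 - Y^2 * s^2 = 1" using xy by (auto simp: X_def Y_def)
    have "(1 + u)^2 - (2 + 2*X) * u = 1 - (X^2 - Y^2 * s^2)"
      unfolding u' by (simp add: power2_eq_square algebra_simps)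
    then have id: "(1 + u)^2 = of_rat (2 + 2*x) * u" using n1 by (simp add: X_def of_rat_add of_rat_mult)
    have r0: "2 + 2*x \<noteq> 0"
    proof
      assume "2 + 2*x = 0"
      then have "x = -1" by linarith
      then have "X = -1" by (simp add: X_def)
      then have "(Y * s)^2 = 0" using n1 by (simp add: power_mult_distrib)
      then have "u = -1" using u' \<open>X = -1\<close> by simp
      then show False using False by simp
    qed
    show ?thesis
      using id r0 uK uq K_1 by (intro exI[of _ "1 + u"] exI[of _ "2 + 2*x"]) (auto intro: K_add alg_int_add)
  qed
qed

lemma back_norm_one:
  assumes "\<eta> \<in> set_prod3 (quad_norm_one_units A) (quad_norm_one_units B) (quad_norm_one_units (A*B))"
  shows "\<exists>\<rho> r. \<rho> \<in> K \<and> algebraic_int \<rho> \<and> r \<noteq> 0 \<and> \<rho>^2 = of_rat r * \<eta>"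
proof -
  from assms obtain u1 u2 u3 where u: "\<eta> = u1 * u2 * u3" "u1 \<in> quad_norm_one_units A"
      "u2 \<in> quad_norm_one_units B" "u3 \<in> quad_norm_one_units (A*B)"
    unfolding set_prod3_def by auto
  obtain p1 r1 where 1: "p1 \<in> K" "algebraic_int p1" "r1 \<noteq> 0" "p1^2 = of_rat r1 * u1"
    using norm_one_rep[OF QA_K u(2)] by blast
  obtain p2 r2 where 2: "p2 \<in> K" "algebraic_int p2" "r2 \<noteq> 0" "p2^2 = of_rat r2 * u2"
    using norm_one_rep[OF QB_K u(3)] by blast
  obtain p3 r3 where 3: "p3 \<in> K" "algebraic_int p3" "r3 \<noteq> 0" "p3^2 = of_rat r3 * u3"
    using norm_one_rep[OF QC_K u(4)] by blast
  have "(p1*p2*p3)^2 = of_rat (r1*r2*r3) * \<eta>"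
    using 1(4) 2(4) 3(4) u(1) by (simp add: power_mult_distrib of_rat_mult)
  moreover have "p1*p2*p3 \<in> K" using 1 2 3 by (intro K_mult)
  moreover have "algebraic_int (p1*p2*p3)" using 1 2 3 by (intro alg_int_mult)
  moreover have "r1*r2*r3 \<noteq> 0" using 1 2 3 by simp
  ultimately show ?thesis by blast
qed

lemma unit_norm:
  assumes "u \<in> K" "algebraic_int u" "inverse u \<in> K" "algebraic_int (inverse u)" "u \<noteq> 0"
    "e1 \<in> {1,-1}" "e2 \<in> {1,-1}" "u * sg e1 e2 u = of_rat n"
  shows "n = 1 \<or> n = -1"
proof -
  have "algebraic_int (sg e1 e2 u)" using sg_alg_int assms by blast
  then have "algebraic_int (u * sg e1 e2 u)" using alg_int_mult assms by blast
  then have 1: "algebraic_int (of_rat n :: complex)" using assms(8) by simp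
  have "algebraic_int (sg e1 e2 (inverse u))" using sg_alg_int assms by blast
  then have "algebraic_int (inverse u * sg e1 e2 (inverse u))" using alg_int_mult assms by blast
  moreover have "inverse u * sg e1 e2 (inverse u) = inverse (u * sg e1 e2 u)"
    using assms(1,3,6,7) by (simp add: sg_inverse)
  ultimately have 2: "algebraic_int (of_rat (inverse n) :: complex)"
    using assms(8) by (simp add: of_rat_inverse)
  have "sg e1 e2 u \<noteq> 0" using sg_zero_iff assms by blast
  then have "n \<noteq> 0" using assms(5,8) by auto
  with 1 2 have "n = 1 \<or> n = -1" using rat_alg_int_unit by blast
  then show ?thesis .
qed

end


lemma norm_rat: "(of_rat x :: complex)^2 - (of_rat y)^2 * of_rat c = of_rat (x*x - c*y*y)"
  by (simp add: of_rat_diff of_rat_mult power2_eq_square algebra_simps)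

lemma real_sign:
  assumes "w \<in> \<real>" "w \<noteq> 0" "w^2 = of_rat r * c" "r \<noteq> 0"
  shows "c \<in> \<real> \<and> (r > 0 \<longrightarrow> Re c > 0) \<and> (r < 0 \<longrightarrow> Re c < 0)"
proof -
  obtain t where t: "w = of_real t" using assms(1) by (auto elim: Reals_cases)
  have t0: "t \<noteq> 0" using t assms(2) by simp
  have R: "(of_rat r :: complex) = of_real (of_rat r)" by (rule cplx_of_rat)
  have r0: "(of_rat r :: real) \<noteq> 0" using assms(4) by simp
  have "c = w^2 / of_rat r" using assms(3,4) by simp
  also have "\<dots> = of_real (t^2 / of_rat r)" unfolding t R by simp
  finally have c: "c = of_real (t^2 / of_rat r)" .
  have tp: "t^2 > 0" using t0 by simp
  show ?thesis
  proof (intro conjI impI)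
    show "c \<in> \<real>" using c by simp
  next
    assume "r > 0" then have "(of_rat r :: real) > 0" by simp
    then show "Re c > 0" using c tp by simp
  next
    assume "r < 0" then have "(of_rat r :: real) < 0" by simp
    then show "Re c < 0" using c tp by (simp add: divide_pos_neg)
  qed
qed

lemma re_mult_real: "x \<in> \<real> \<Longrightarrow> y \<in> \<real> \<Longrightarrow> Re (x * y) = Re x * Re y"
  by (auto elim!: Reals_cases)

context biq begin

lemma AA2: "A^2 = of_rat (of_int a)" using AA by (simp add: power2_eq_square)
lemma ABAB2: "(A*B)^2 = of_rat (of_int a * of_int b)" using AA BB by (simp add: power2_eq_square algebra_simps of_rat_mult)
lemma BB2: "B^2 = of_rat (of_int b)" using BB by (simp add: power2_eq_square)

lemma qn_A:
  assumes "u \<in> unit_group (quad_field A)" "u = E x y 0 0" "x*x - of_int a*y*y = 1"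
  shows "u \<in> quad_norm_one_units A"
proof -
  have "1 = (of_rat x :: complex)^2 - (of_rat y)^2 * A^2" using norm_rat[of x y "of_int a"] assms(3) AA2 by simp
  moreover have "u = of_rat x + of_rat y * A" using assms(2) by (simp add: E_def)
  ultimately show ?thesis using assms(1) unfolding quad_norm_one_units_def quad_norm_is_def by blast
qed

lemma qn_B:
  assumes "u \<in> unit_group (quad_field B)" "u = E x 0 y 0" "x*x - of_int b*y*y = 1"
  shows "u \<in> quad_norm_one_units B"
proof -
  have "1 = (of_rat x :: complex)^2 - (of_rat y)^2 * B^2" using norm_rat[of x y "of_int b"] assms(3) BB2 by simp
  moreover have "u = of_rat x + of_rat y * B" using assms(2) by (simp add: E_def)
  ultimately show ?thesis using assms(1) unfolding quad_norm_one_units_def quad_norm_is_def by blast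
qed

lemma qn_C:
  assumes "u \<in> unit_group (quad_field (A*B))" "u = E x 0 0 y" "x*x - of_int a * of_int b*y*y = 1"
  shows "u \<in> quad_norm_one_units (A*B)"
proof -
  have "1 = (of_rat x :: complex)^2 - (of_rat y)^2 * (A*B)^2"
    using norm_rat[of x y "of_int a * of_int b"] assms(3) ABAB2 by simp
  moreover have "u = of_rat x + of_rat y * (A*B)" using assms(2) by (simp add: E_def)
  ultimately show ?thesis using assms(1) unfolding quad_norm_one_units_def quad_norm_is_def by blast
qed

lemma tot_sign:
  assumes "\<eta> \<in> K" "totally_positive a b \<eta> \<or> totally_negative a b \<eta>"
    "e1 \<in> {1,-1}" "e2 \<in> {1,-1}"
  shows "sg e1 e2 \<eta> \<in> \<real> \<and> \<eta> \<in> \<real> \<and> Re (sg e1 e2 \<eta>) * Re \<eta> > 0"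
proof -
  have c: "biquad_conj_is a b \<eta> e1 e2 (sg e1 e2 \<eta>)" using conj_is_iff[OF assms(1)] by simp
  have c1: "biquad_conj_is a b \<eta> 1 1 \<eta>" using conj_is_iff[OF assms(1)] sg_11[OF assms(1)] by simp
  from assms(2) show ?thesis
  proof
    assume tp: "totally_positive a b \<eta>"
    have "sg e1 e2 \<eta> \<in> \<real> \<and> Re (sg e1 e2 \<eta>) > 0" using tp c assms(3,4) unfolding totally_positive_def by blast
    moreover have "\<eta> \<in> \<real> \<and> Re \<eta> > 0" using tp c1 unfolding totally_positive_def by blast
    ultimately show ?thesis by simp
  next
    assume tp: "totally_negative a b \<eta>"
    have "sg e1 e2 \<eta> \<in> \<real> \<and> Re (sg e1 e2 \<eta>) < 0" using tp c assms(3,4) unfolding totally_negative_def by blast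
    moreover have "\<eta> \<in> \<real> \<and> Re \<eta> < 0" using tp c1 unfolding totally_negative_def by blast
    ultimately show ?thesis by (simp add: mult_neg_neg)
  qed
qed

lemma pos_from_sign:
  assumes "x \<in> \<real>" "y \<in> \<real>" "Re x * Re y > 0" "x * y = of_rat q * (u * u)" "u \<in> \<real>" "u \<noteq> 0"
  shows "q > 0"
proof -
  obtain t where t: "u = of_real t" using assms(5) by (auto elim: Reals_cases)
  have t0: "t \<noteq> 0" using t assms(6) by simp
  have "Re (x * y) = Re x * Re y" using re_mult_real assms(1,2) by blast
  also have "Re (x * y) = of_rat q * (t * t)" unfolding assms(4) t cplx_of_rat[of q]
    by (simp del: of_real_mult add: of_real_mult[symmetric])
  finally have "of_rat q * (t * t) > (0::real)" using assms(3) by simp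
  moreover have "t * t > 0" using t0 not_real_square_gt_zero by blast
  ultimately have "(of_rat q :: real) > 0" by (simp add: zero_less_mult_iff)
  then show ?thesis by simp
qed

end


context biq begin

lemma back_real:
  assumes KR: "K \<subseteq> \<real>"
    and mem: "\<eta> \<in> set_prod3 (unit_group (quad_field A)) (unit_group (quad_field B)) (unit_group (quad_field (A*B)))"
    and tot: "totally_positive a b \<eta> \<or> totally_negative a b \<eta>"
  shows "\<exists>\<rho> r. \<rho> \<in> K \<and> algebraic_int \<rho> \<and> r \<noteq> 0 \<and> \<rho>^2 = of_rat r * \<eta>"
proof -
  from mem obtain u1 u2 u3 where u: "\<eta> = u1 * u2 * u3" and U1: "u1 \<in> unit_group (quad_field A)"
      and U2: "u2 \<in> unit_group (quad_field B)" and U3: "u3 \<in> unit_group (quad_field (A*B))"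
    unfolding set_prod3_def by auto
  from U1 have U1': "u1 \<in> quad_field A" "algebraic_int u1" "u1 \<noteq> 0" "inverse u1 \<in> quad_field A" "algebraic_int (inverse u1)"
    unfolding U_iff by auto
  from U2 have U2': "u2 \<in> quad_field B" "algebraic_int u2" "u2 \<noteq> 0" "inverse u2 \<in> quad_field B" "algebraic_int (inverse u2)"
    unfolding U_iff by auto
  from U3 have U3': "u3 \<in> quad_field (A*B)" "algebraic_int u3" "u3 \<noteq> 0" "inverse u3 \<in> quad_field (A*B)" "algebraic_int (inverse u3)"
    unfolding U_iff by auto
  have K1: "u1 \<in> K" "inverse u1 \<in> K" using U1' QA_K by auto
  have K2: "u2 \<in> K" "inverse u2 \<in> K" using U2' QB_K by auto
  have K3: "u3 \<in> K" "inverse u3 \<in> K" using U3' QC_K by auto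
  obtain x1 y1 where u1: "u1 = E x1 y1 0 0" using U1'(1) unfolding QA by auto
  obtain x2 y2 where u2: "u2 = E x2 0 y2 0" using U2'(1) unfolding QB by auto
  obtain x3 y3 where u3: "u3 = E x3 0 0 y3" using U3'(1) unfolding QC by auto
  define v1 where "v1 = E x1 (-y1) 0 0"
  define v2 where "v2 = E x2 0 (-y2) 0"
  define v3 where "v3 = E x3 0 0 (-y3)"
  define n1 where "n1 = x1*x1 - of_int a*y1*y1"
  define n2 where "n2 = x2*x2 - of_int b*y2*y2"
  define n3 where "n3 = x3*x3 - of_int a * of_int b*y3*y3"
  have c1: "sg (-1) 1 u1 = v1" "sg 1 (-1) u1 = u1" "sg (-1) (-1) u1 = v1"
    unfolding u1 v1_def by (simp_all add: sg_E)
  have c2: "sg (-1) 1 u2 = u2" "sg 1 (-1) u2 = v2" "sg (-1) (-1) u2 = v2"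
    unfolding u2 v2_def by (simp_all add: sg_E)
  have c3: "sg (-1) 1 u3 = v3" "sg 1 (-1) u3 = v3" "sg (-1) (-1) u3 = u3"
    unfolding u3 v3_def by (simp_all add: sg_E)
  have nn1: "u1 * v1 = of_rat n1" unfolding u1 v1_def n1_def by (simp add: E_mult E_rat)
  have nn2: "u2 * v2 = of_rat n2" unfolding u2 v2_def n2_def by (simp add: E_mult E_rat)
  have nn3: "u3 * v3 = of_rat n3" unfolding u3 v3_def n3_def by (simp add: E_mult E_rat algebra_simps)
  have n1: "n1 = 1 \<or> n1 = -1"
    using unit_norm[OF K1(1) U1'(2) K1(2) U1'(5) U1'(3), of "-1" 1 n1] c1 nn1 by simp
  have n2: "n2 = 1 \<or> n2 = -1"
    using unit_norm[OF K2(1) U2'(2) K2(2) U2'(5) U2'(3), of 1 "-1" n2] c2 nn2 by simp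
  have n3: "n3 = 1 \<or> n3 = -1"
    using unit_norm[OF K3(1) U3'(2) K3(2) U3'(5) U3'(3), of 1 "-1" n3] c3 nn3 by simp
  have \<eta>K: "\<eta> \<in> K" using u K1 K2 K3 by (simp add: K_mult)
  have \<eta>0: "\<eta> \<noteq> 0" using u U1'(3) U2'(3) U3'(3) by simp
  have g2: "sg (-1) 1 \<eta> = v1 * u2 * v3"
    unfolding u using K1 K2 K3 by (simp add: sg_mult K_mult c1 c2 c3)
  have g1: "sg 1 (-1) \<eta> = u1 * v2 * v3"
    unfolding u using K1 K2 K3 by (simp add: sg_mult K_mult c1 c2 c3)
  have g3: "sg (-1) (-1) \<eta> = v1 * v2 * u3"
    unfolding u using K1 K2 K3 by (simp add: sg_mult K_mult c1 c2 c3)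
  have "n1 * n3 > 0"
  proof -
    have t: "sg (-1) 1 \<eta> \<in> \<real> \<and> \<eta> \<in> \<real> \<and> Re (sg (-1) 1 \<eta>) * Re \<eta> > 0"
      using tot_sign[OF \<eta>K tot, of "-1" 1] by simp
    have "sg (-1) 1 \<eta> * \<eta> = of_rat (n1 * n3) * (u2 * u2)"
      by (simp only: g2) (simp add: u of_rat_mult nn1[symmetric] nn3[symmetric] algebra_simps)
    then show ?thesis using pos_from_sign[of "sg (-1) 1 \<eta>" \<eta> "n1*n3" u2] t KR K2 U2'(3) by auto
  qed
  moreover have "n2 * n3 > 0"
  proof -
    have t: "sg 1 (-1) \<eta> \<in> \<real> \<and> \<eta> \<in> \<real> \<and> Re (sg 1 (-1) \<eta>) * Re \<eta> > 0"
      using tot_sign[OF \<eta>K tot, of 1 "-1"] by simp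
    have "sg 1 (-1) \<eta> * \<eta> = of_rat (n2 * n3) * (u1 * u1)"
      by (simp only: g1) (simp add: u of_rat_mult nn2[symmetric] nn3[symmetric] algebra_simps)
    then show ?thesis using pos_from_sign[of "sg 1 (-1) \<eta>" \<eta> "n2*n3" u1] t KR K1 U1'(3) by auto
  qed
  ultimately have cases: "(n1 = 1 \<and> n2 = 1 \<and> n3 = 1) \<or> (n1 = -1 \<and> n2 = -1 \<and> n3 = -1)"
    using n1 n2 n3 by auto
  then show ?thesis
  proof
    assume "n1 = 1 \<and> n2 = 1 \<and> n3 = 1"
    then have "u1 \<in> quad_norm_one_units A" "u2 \<in> quad_norm_one_units B" "u3 \<in> quad_norm_one_units (A*B)"
      using qn_A[OF U1 u1] qn_B[OF U2 u2] qn_C[OF U3 u3] by (auto simp: n1_def n2_def n3_def)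
    then have "\<eta> \<in> set_prod3 (quad_norm_one_units A) (quad_norm_one_units B) (quad_norm_one_units (A*B))"
      unfolding set_prod3_def u by blast
    then show ?thesis by (rule back_norm_one)
  next
    assume neg: "n1 = -1 \<and> n2 = -1 \<and> n3 = -1"
    have m1: "u1 * v1 = -1" "u2 * v2 = -1" "u3 * v3 = -1" using neg nn1 nn2 nn3 by auto
    obtain q where q: "\<eta> + sg (-1) 1 \<eta> + sg 1 (-1) \<eta> + sg (-1) (-1) \<eta> = of_rat q"
      using trace_rat[OF \<eta>K] by blast
    have tr1: "u1 + v1 = of_rat (2*x1)" unfolding u1 v1_def by (simp add: E_add E_rat)
    have tr2: "u2 + v2 = of_rat (2*x2)" unfolding u2 v2_def by (simp add: E_add E_rat)
    have tr3: "u3 + v3 = of_rat (2*x3)" unfolding u3 v3_def by (simp add: E_add E_rat)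
    define rho where "rho = (\<lambda>s1 s2 s3. \<eta> + of_rat s1 * u1 + of_rat s2 * u2 + of_rat s3 * u3)"
    have claim: "\<exists>\<rho> r. \<rho> \<in> K \<and> algebraic_int \<rho> \<and> r \<noteq> 0 \<and> \<rho>^2 = of_rat r * \<eta>"
      if s: "s1 \<in> {1,-1}" "s2 \<in> {1,-1}" "s3 \<in> {1,-1}" "s1*s2*s3 = -1" and nz: "rho s1 s2 s3 \<noteq> 0"
      for s1 s2 s3 :: rat
    proof -
      have ss: "(of_rat s1::complex) * of_rat s1 = 1" "(of_rat s2::complex) * of_rat s2 = 1"
          "(of_rat s3::complex) * of_rat s3 = 1" "(of_rat s1::complex) * of_rat s2 * of_rat s3 = -1"
        using s by (auto simp flip: of_rat_mult)
      have ai: "algebraic_int (of_rat s :: complex)" if "s \<in> {1,-1}" for s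
        using that by auto
      define r where "r = q + 2 * (s1 * (2*x1) + s2 * (2*x2) + s3 * (2*x3))"
      have "(rho s1 s2 s3)^2 = (\<eta> + v1*u2*v3 + u1*v2*v3 + v1*v2*u3 + 2*(of_rat s1*(u1+v1) + of_rat s2*(u2+v2) + of_rat s3*(u3+v3))) * \<eta>"
        unfolding rho_def u using key_id[OF m1 ss] by (simp add: algebra_simps)
      also have "\<eta> + v1*u2*v3 + u1*v2*v3 + v1*v2*u3 = of_rat q" using q g1 g2 g3 by (simp add: algebra_simps)
      finally have eq: "(rho s1 s2 s3)^2 = of_rat r * \<eta>"
        unfolding tr1 tr2 tr3 r_def by (simp add: of_rat_add of_rat_mult)
      have "rho s1 s2 s3 \<in> K" unfolding rho_def using \<eta>K K1 K2 K3 by (intro K_add K_mult K_rat)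
      moreover have "algebraic_int (rho s1 s2 s3)"
        unfolding rho_def using U1'(2) U2'(2) U3'(2) ai s \<eta>K u
        by (intro alg_int_add alg_int_mult) (auto intro: alg_int_mult)
      moreover have "r \<noteq> 0" using eq nz by auto
      ultimately show ?thesis using eq by blast
    qed
    have sum4: "rho 1 1 (-1) + rho 1 (-1) 1 + rho (-1) 1 1 + rho (-1) (-1) (-1) = 4 * \<eta>"
      unfolding rho_def by (simp add: of_rat_minus algebra_simps)
    have "rho 1 1 (-1) \<noteq> 0 \<or> rho 1 (-1) 1 \<noteq> 0 \<or> rho (-1) 1 1 \<noteq> 0 \<or> rho (-1) (-1) (-1) \<noteq> 0"
    proof (rule ccontr)
      assume "\<not> ?thesis"
      then have "4 * \<eta> = 0" using sum4 by simp
      then show False using \<eta>0 by simp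
    qed
    then show ?thesis using claim[of 1 1 "-1"] claim[of 1 "-1" 1] claim[of "-1" 1 1] claim[of "-1" "-1" "-1"]
      by auto
  qed
qed

end


lemma quad_neg:
  assumes "z \<in> quad_field s" shows "- z \<in> quad_field s"
proof -
  from assms obtain x y where "z = of_rat x + of_rat y * s" unfolding quad_field_def by auto
  then have "-z = of_rat (-x) + of_rat (-y) * s" by (simp add: of_rat_minus)
  then show ?thesis unfolding quad_field_def by blast
qed

lemma unit_neg: "z \<in> unit_group (quad_field s) \<Longrightarrow> - z \<in> unit_group (quad_field s)"
  unfolding unit_group_def ring_of_integers_def using quad_neg by auto

context biq begin

lemma forward:
  assumes U: "\<eta> \<in> unit_group K" and \<rho>K: "\<rho> \<in> K" and \<rho>i: "algebraic_int \<rho>" and r: "r \<noteq> 0"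
    and eq: "\<rho>^2 = of_rat r * \<eta>"
  shows "\<eta> \<in> OK_star a b"
proof -
  from U have \<eta>K: "\<eta> \<in> K" and \<eta>i: "algebraic_int \<eta>" and \<eta>0: "\<eta> \<noteq> 0"
    and i\<eta>K: "inverse \<eta> \<in> K" and i\<eta>i: "algebraic_int (inverse \<eta>)"
    unfolding U_iff by auto
  define R where "R = (of_rat r :: complex)"
  define iR where "iR = (of_rat (inverse r) :: complex)"
  have R0: "R \<noteq> 0" using r by (simp add: R_def)
  have iRR: "iR * R = 1" using r by (simp add: R_def iR_def flip: of_rat_mult)
  have iRK: "iR \<in> K" unfolding iR_def by (rule K_rat)
  have iR0: "iR \<noteq> 0" using iRR by auto
  have eq': "\<rho>^2 = R * \<eta>" using eq by (simp add: R_def)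
  have \<rho>0: "\<rho> \<noteq> 0" using eq' R0 \<eta>0 by auto
  have i\<rho>: "inverse \<rho> = \<rho> * inverse \<eta> * iR"
  proof -
    have "\<rho> * (\<rho> * inverse \<eta> * iR) = \<rho>^2 * inverse \<eta> * iR" by (simp add: power2_eq_square)
    also have "\<dots> = 1" using eq' \<eta>0 iRR by (simp add: field_simps)
    finally show ?thesis by (metis inverse_unique)
  qed
  have i\<rho>K: "inverse \<rho> \<in> K" unfolding i\<rho> using \<rho>K i\<eta>K iRK by (intro K_mult)
  let ?E = "{1, -1} :: int set"
  have sgK: "sg e1 e2 \<rho> \<in> K" for e1 e2 using sg_K'[OF \<rho>K] .
  have sgi: "algebraic_int (sg e1 e2 \<rho>)" if "e1 \<in> ?E" "e2 \<in> ?E" for e1 e2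
    using sg_alg_int[OF \<rho>K \<rho>i that] .
  have sg0: "sg e1 e2 \<rho> \<noteq> 0" if "e1 \<in> ?E" "e2 \<in> ?E" for e1 e2
    using sg_zero_iff[OF \<rho>K that] \<rho>0 by simp
  have sgsq: "(sg e1 e2 \<rho>)^2 = R * sg e1 e2 \<eta>" if "e1 \<in> ?E" "e2 \<in> ?E" for e1 e2
  proof -
    have "(sg e1 e2 \<rho>)^2 = sg e1 e2 (\<rho>^2)" using sg_power[OF \<rho>K that] by simp
    also have "\<dots> = sg e1 e2 (R * \<eta>)" using eq' by simp
    also have "\<dots> = R * sg e1 e2 \<eta>" using sg_mult[OF _ \<eta>K that, of R] K_rat sg_rat by (simp add: R_def)
    finally show ?thesis .
  qed
  have sgiv: "sg e1 e2 (inverse \<eta>) = inverse (sg e1 e2 \<eta>)" if "e1 \<in> ?E" "e2 \<in> ?E" for e1 e2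
    using sg_inverse[OF \<eta>K i\<eta>K that] .
  have sgiv\<rho>: "sg e1 e2 (inverse \<rho>) = inverse (sg e1 e2 \<rho>)" if "e1 \<in> ?E" "e2 \<in> ?E" for e1 e2
    using sg_inverse[OF \<rho>K i\<rho>K that] .
  have sgmul: "sg e1 e2 (x * y) = sg e1 e2 x * sg e1 e2 y" if "x \<in> K" "y \<in> K" "e1 \<in> ?E" "e2 \<in> ?E" for e1 e2 x y
    using sg_mult[OF that] .
  have sgR: "sg e1 e2 iR = iR" for e1 e2 unfolding iR_def by (rule sg_rat)

  text \<open>The three relative norms, divided by r.\<close>
  define v1 where "v1 = iR * \<rho> * sg 1 (-1) \<rho>"
  define v2 where "v2 = iR * \<rho> * sg (-1) 1 \<rho>"
  define v3 where "v3 = iR * \<rho> * sg (-1) (-1) \<rho>"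
  have v1K: "v1 \<in> K" unfolding v1_def using iRK \<rho>K sgK by (intro K_mult)
  have v2K: "v2 \<in> K" unfolding v2_def using iRK \<rho>K sgK by (intro K_mult)
  have v3K: "v3 \<in> K" unfolding v3_def using iRK \<rho>K sgK by (intro K_mult)
  have v10: "v1 \<noteq> 0" unfolding v1_def using iR0 \<rho>0 sg0 by simp
  have v20: "v2 \<noteq> 0" unfolding v2_def using iR0 \<rho>0 sg0 by simp
  have v30: "v3 \<noteq> 0" unfolding v3_def using iR0 \<rho>0 sg0 by simp
  have fix1: "sg 1 (-1) v1 = v1"
    unfolding v1_def using iRK \<rho>K sgK by (simp add: sgmul K_mult sgR sg_comp sg_11)
  have fix2: "sg (-1) 1 v2 = v2"
    unfolding v2_def using iRK \<rho>K sgK by (simp add: sgmul K_mult sgR sg_comp sg_11)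
  have fix3: "sg (-1) (-1) v3 = v3"
    unfolding v3_def using iRK \<rho>K sgK by (simp add: sgmul K_mult sgR sg_comp sg_11)
  have sq: "v^2 = \<eta> * sg e1 e2 \<eta>" if "v = iR * \<rho> * sg e1 e2 \<rho>" "e1 \<in> ?E" "e2 \<in> ?E" for v e1 e2
  proof -
    have "v^2 = iR^2 * \<rho>^2 * (sg e1 e2 \<rho>)^2" unfolding that by (simp add: power_mult_distrib)
    also have "\<dots> = (iR * R)^2 * (\<eta> * sg e1 e2 \<eta>)" using eq' sgsq[OF that(2,3)] by (simp add: power2_eq_square algebra_simps)
    finally show ?thesis using iRR by simp
  qed
  have isq: "(inverse v)^2 = inverse \<eta> * sg e1 e2 (inverse \<eta>)" if "v = iR * \<rho> * sg e1 e2 \<rho>" "e1 \<in> ?E" "e2 \<in> ?E" for v e1 e2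
  proof -
    have "(inverse v)^2 = inverse (v^2)" by (simp add: power2_eq_square inverse_mult_distrib)
    also have "\<dots> = inverse \<eta> * inverse (sg e1 e2 \<eta>)" using sq[OF that] by (simp add: inverse_mult_distrib)
    finally show ?thesis using sgiv[OF that(2,3)] by simp
  qed
  have unit_v: "algebraic_int v \<and> inverse v \<in> K \<and> algebraic_int (inverse v) \<and> sg e1 e2 (inverse v) = inverse (sg e1 e2 v)"
    if "v = iR * \<rho> * sg e1 e2 \<rho>" "e1 \<in> ?E" "e2 \<in> ?E" for v e1 e2
  proof -
    have "algebraic_int (\<eta> * sg e1 e2 \<eta>)" using \<eta>i sg_alg_int[OF \<eta>K \<eta>i that(2,3)] by (rule alg_int_mult)
    then have "algebraic_int (v^2)" using sq[OF that] by simp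
    then have 1: "algebraic_int v" by (rule alg_int_sqrt_of)
    have "algebraic_int (inverse \<eta> * sg e1 e2 (inverse \<eta>))"
      using i\<eta>i sg_alg_int[OF i\<eta>K i\<eta>i that(2,3)] by (rule alg_int_mult)
    then have "algebraic_int ((inverse v)^2)" using isq[OF that] by simp
    then have 2: "algebraic_int (inverse v)" by (rule alg_int_sqrt_of)
    have iiR: "inverse iR = R" using iRR by (rule inverse_unique)
    have "inverse v = inverse iR * inverse \<rho> * inverse (sg e1 e2 \<rho>)"
      unfolding that by (simp add: inverse_mult_distrib)
    also have "\<dots> = R * inverse \<rho> * sg e1 e2 (inverse \<rho>)"
      unfolding iiR sgiv\<rho>[OF that(2,3)] ..
    finally have "inverse v = R * inverse \<rho> * sg e1 e2 (inverse \<rho>)" .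
    then have 3: "inverse v \<in> K" using i\<rho>K K_rat sg_K' by (simp add: R_def K_mult)
    have vK: "v \<in> K" unfolding that using iRK \<rho>K sgK by (intro K_mult)
    have 4: "sg e1 e2 (inverse v) = inverse (sg e1 e2 v)" using sg_inverse[OF vK 3 that(2,3)] .
    show ?thesis using 1 2 3 4 by blast
  qed
  have u1: "v1 \<in> unit_group (quad_field A)"
  proof -
    have h: "algebraic_int v1 \<and> inverse v1 \<in> K \<and> algebraic_int (inverse v1) \<and> sg 1 (-1) (inverse v1) = inverse (sg 1 (-1) v1)"
      using unit_v[OF v1_def] by simp
    have "v1 \<in> quad_field A" using fixA[OF v1K fix1] .
    moreover have "inverse v1 \<in> quad_field A" using fixA h fix1 by simp
    ultimately show ?thesis unfolding U_iff using h v10 by blast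
  qed
  have u2: "v2 \<in> unit_group (quad_field B)"
  proof -
    have h: "algebraic_int v2 \<and> inverse v2 \<in> K \<and> algebraic_int (inverse v2) \<and> sg (-1) 1 (inverse v2) = inverse (sg (-1) 1 v2)"
      using unit_v[OF v2_def] by simp
    have "v2 \<in> quad_field B" using fixB[OF v2K fix2] .
    moreover have "inverse v2 \<in> quad_field B" using fixB h fix2 by simp
    ultimately show ?thesis unfolding U_iff using h v20 by blast
  qed
  have u3: "v3 \<in> unit_group (quad_field (A*B))"
  proof -
    have h: "algebraic_int v3 \<and> inverse v3 \<in> K \<and> algebraic_int (inverse v3) \<and> sg (-1) (-1) (inverse v3) = inverse (sg (-1) (-1) v3)"
      using unit_v[OF v3_def] by simp
    have "v3 \<in> quad_field (A*B)" using fixC[OF v3K fix3] .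
    moreover have "inverse v3 \<in> quad_field (A*B)" using fixC h fix3 by simp
    ultimately show ?thesis unfolding U_iff using h v30 by blast
  qed
  define P where "P = iR * iR * (\<rho> * sg 1 (-1) \<rho> * sg (-1) 1 \<rho> * sg (-1) (-1) \<rho>)"
  obtain x1 y1 where xy1: "v1 = E x1 y1 0 0" using u1 unfolding U_iff QA by auto
  obtain x2 y2 where xy2: "v2 = E x2 0 y2 0" using u2 unfolding U_iff QB by auto
  obtain x3 y3 where xy3: "v3 = E x3 0 0 y3" using u3 unfolding U_iff QC by auto
  define n1 where "n1 = x1*x1 - of_int a*y1*y1"
  define n2 where "n2 = x2*x2 - of_int b*y2*y2"
  define n3 where "n3 = x3*x3 - of_int a * of_int b*y3*y3"
  have N1: "v1 * sg (-1) 1 v1 = of_rat n1" unfolding xy1 n1_def by (simp add: sg_E E_mult E_rat)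
  have N2: "v2 * sg 1 (-1) v2 = of_rat n2" unfolding xy2 n2_def by (simp add: sg_E E_mult E_rat)
  have N3: "v3 * sg 1 (-1) v3 = of_rat n3" unfolding xy3 n3_def by (simp add: sg_E E_mult E_rat algebra_simps)
  have P1: "v1 * sg (-1) 1 v1 = P" unfolding v1_def P_def
    using iRK \<rho>K sgK by (simp add: sgmul K_mult sgR sg_comp algebra_simps)
  have P2: "v2 * sg 1 (-1) v2 = P" unfolding v2_def P_def
    using iRK \<rho>K sgK by (simp add: sgmul K_mult sgR sg_comp algebra_simps)
  have P3: "v3 * sg 1 (-1) v3 = P" unfolding v3_def P_def
    using iRK \<rho>K sgK by (simp add: sgmul K_mult sgR sg_comp algebra_simps)
  have n12: "n2 = n1" using N1 N2 P1 P2 by simp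
  have n13: "n3 = n1" using N1 N3 P1 P3 by simp
  have prod: "v1 * v2 * v3 = \<eta> * of_rat n1"
  proof -
    have "v1 * v2 * v3 = (iR * \<rho>^2) * P" unfolding v1_def v2_def v3_def P_def
      by (simp add: power2_eq_square algebra_simps)
    also have "iR * \<rho>^2 = \<eta>" using eq' iRR by (simp add: algebra_simps)
    finally show ?thesis using N1 P1 by simp
  qed
  have m0: "n1 \<noteq> 0" using prod v10 v20 v30 \<eta>0 by auto
  have m: "n1 = 1 \<or> n1 = -1"
  proof -
    have on: "of_rat n1 = v1 * v2 * v3 * inverse \<eta>" using prod \<eta>0 by (simp add: field_simps)
    moreover have "algebraic_int (v1 * v2 * v3 * inverse \<eta>)"
      using u1 u2 u3 i\<eta>i unfolding U_iff by (intro alg_int_mult) auto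
    ultimately have 1: "algebraic_int (of_rat n1 :: complex)" by simp
    have "of_rat (inverse n1) = inverse (v1 * v2 * v3 * inverse \<eta>)"
      using on by (simp add: of_rat_inverse)
    also have "\<dots> = \<eta> * inverse v1 * inverse v2 * inverse v3"
      by (simp add: inverse_mult_distrib mult_ac)
    finally have "of_rat (inverse n1) = \<eta> * inverse v1 * inverse v2 * inverse v3" .
    moreover have "algebraic_int (\<eta> * inverse v1 * inverse v2 * inverse v3)"
      using u1 u2 u3 \<eta>i unfolding U_iff by (intro alg_int_mult) auto
    ultimately have 2: "algebraic_int (of_rat (inverse n1) :: complex)" by simp
    show ?thesis using rat_alg_int_unit[OF 1 2 m0] .
  qed
  show ?thesis
  proof (cases "K \<subseteq> \<real>")
    case True
    have \<eta>eq: "\<eta> = (of_rat n1 * v1) * v2 * v3"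
      using prod m by auto
    have "of_rat n1 * v1 \<in> unit_group (quad_field A)" using m u1 unit_neg by auto
    then have mem: "\<eta> \<in> set_prod3 (unit_group (quad_field A)) (unit_group (quad_field B)) (unit_group (quad_field (A*B)))"
      unfolding set_prod3_def using \<eta>eq u2 u3 by blast
    have sgn: "sg e1 e2 \<eta> \<in> \<real> \<and> (r > 0 \<longrightarrow> Re (sg e1 e2 \<eta>) > 0) \<and> (r < 0 \<longrightarrow> Re (sg e1 e2 \<eta>) < 0)"
      if "e1 \<in> ?E" "e2 \<in> ?E" for e1 e2
      using real_sign[of "sg e1 e2 \<rho>" r "sg e1 e2 \<eta>"] sgsq[OF that] sg0[OF that] sgK True r
      by (auto simp: R_def)
    have "totally_positive a b \<eta> \<or> totally_negative a b \<eta>"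
    proof (cases "r > 0")
      case True
      then show ?thesis unfolding totally_positive_def using sgn conj_is_iff[OF \<eta>K] by auto
    next
      case False
      then have "r < 0" using r by simp
      then show ?thesis unfolding totally_negative_def using sgn conj_is_iff[OF \<eta>K] by auto
    qed
    then show ?thesis unfolding OK_star_eq using True mem by simp
  next
    case False
    then have "a < 0 \<or> b < 0" by (rule nonreal_K)
    then have "n1 \<ge> 0"
    proof
      assume "a < 0"
      then have "- (of_int a::rat) \<ge> 0" by simp
      moreover have "y1 * y1 \<ge> (0::rat)" by simp
      ultimately have "(- of_int a) * (y1 * y1) \<ge> (0::rat)" by (rule mult_nonneg_nonneg)
      then have "- of_int a * y1 * y1 \<ge> (0::rat)" by (simp add: mult.assoc)
      moreover have "x1 * x1 \<ge> 0" by simp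
      ultimately show ?thesis unfolding n1_def by linarith
    next
      assume "b < 0"
      then have "- (of_int b::rat) \<ge> 0" by simp
      moreover have "y2 * y2 \<ge> (0::rat)" by simp
      ultimately have "(- of_int b) * (y2 * y2) \<ge> (0::rat)" by (rule mult_nonneg_nonneg)
      then have "- of_int b * y2 * y2 \<ge> (0::rat)" by (simp add: mult.assoc)
      moreover have "x2 * x2 \<ge> 0" by simp
      ultimately show ?thesis using n12 unfolding n2_def by linarith
    qed
    then have m1: "n1 = 1" using m by auto
    have "v1 \<in> quad_norm_one_units A" using qn_A[OF u1 xy1] m1 n1_def by simp
    moreover have "v2 \<in> quad_norm_one_units B" using qn_B[OF u2 xy2] m1 n12 n2_def by simp
    moreover have "v3 \<in> quad_norm_one_units (A*B)" using qn_C[OF u3 xy3] m1 n13 n3_def by simp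
    moreover have "\<eta> = v1 * v2 * v3" using prod m1 by simp
    ultimately have "\<eta> \<in> set_prod3 (quad_norm_one_units A) (quad_norm_one_units B) (quad_norm_one_units (A*B))"
      unfolding set_prod3_def by blast
    then show ?thesis unfolding OK_star_eq using False by simp
  qed
qed

end

theorem mainTheorem5:
  fixes a b :: int and \<eta> :: complex
  assumes "squarefree a" and "squarefree b" and "a \<noteq> 1" and "b \<noteq> 1" and "a \<noteq> b"
    and "\<eta> \<in> unit_group (biquad_field a b)"
  shows "((\<exists>\<rho> \<in> ring_of_integers (biquad_field a b). \<exists>r :: rat. r \<noteq> 0 \<and> \<eta> = \<rho>\<^sup>2 / of_rat r)
           \<longleftrightarrow> \<eta> \<in> OK_star a b)
      \<and> (\<forall>u \<in> unit_group (biquad_field a b). u\<^sup>2 \<in> OK_star a b \<and> - (u\<^sup>2) \<in> OK_star a b)"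
proof -
  interpret biq a b using assms(1-5) by unfold_locales
  have iff: "((\<exists>\<rho> \<in> ring_of_integers K. \<exists>r :: rat. r \<noteq> 0 \<and> e = \<rho>\<^sup>2 / of_rat r) \<longleftrightarrow> e \<in> OK_star a b)"
    if eU: "e \<in> unit_group K" for e
  proof
    assume "\<exists>\<rho> \<in> ring_of_integers K. \<exists>r :: rat. r \<noteq> 0 \<and> e = \<rho>\<^sup>2 / of_rat r"
    then obtain \<rho> r where \<rho>O: "\<rho> \<in> ring_of_integers K" and r: "r \<noteq> 0" and e: "e = \<rho>\<^sup>2 / of_rat r"
      by blast
    have \<rho>: "\<rho> \<in> K" "algebraic_int \<rho>" using \<rho>O by (simp_all add: O_iff)
    have "\<rho>^2 = of_rat r * e" using e r by simp
    then show "e \<in> OK_star a b" using forward[OF eU \<rho> r] by simp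
  next
    assume "e \<in> OK_star a b"
    then have "\<exists>\<rho> r. \<rho> \<in> K \<and> algebraic_int \<rho> \<and> r \<noteq> 0 \<and> \<rho>^2 = of_rat r * e"
    proof (cases "K \<subseteq> \<real>")
      case True
      with \<open>e \<in> OK_star a b\<close> show ?thesis unfolding OK_star_eq using back_real[OF True] by auto
    next
      case False
      with \<open>e \<in> OK_star a b\<close> show ?thesis unfolding OK_star_eq using back_norm_one by auto
    qed
    then obtain \<rho> r where \<rho>: "\<rho> \<in> K" "algebraic_int \<rho>" and r: "r \<noteq> 0" and e: "\<rho>^2 = of_rat r * e"
      by blast
    have "e = \<rho>\<^sup>2 / of_rat r" using e r by simp
    moreover have "\<rho> \<in> ring_of_integers K" using \<rho> by (simp add: O_iff)
    ultimately show "\<exists>\<rho> \<in> ring_of_integers K. \<exists>r :: rat. r \<noteq> 0 \<and> e = \<rho>\<^sup>2 / of_rat r"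
      using r by blast
  qed
  have part2: "u\<^sup>2 \<in> OK_star a b \<and> - (u\<^sup>2) \<in> OK_star a b" if uU: "u \<in> unit_group K" for u
  proof -
    from uU have uK: "u \<in> K" and ui: "algebraic_int u" and u0: "u \<noteq> 0"
      and iuK: "inverse u \<in> K" and iui: "algebraic_int (inverse u)"
      unfolding U_iff by auto
    have sqK: "u^2 \<in> K" "inverse (u^2) \<in> K" using uK iuK by (simp_all add: K_power power_inverse[symmetric])
    have sqi: "algebraic_int (u^2)" "algebraic_int (inverse (u^2))"
      using ui iui by (simp_all add: alg_int_power power_inverse[symmetric])
    have U1: "u^2 \<in> unit_group K" unfolding U_iff using sqK sqi u0 by simp
    have U2: "- (u^2) \<in> unit_group K" unfolding U_iff using sqK sqi u0 K_minus by simp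
    have uO: "u \<in> ring_of_integers K" unfolding O_iff using uK ui by simp
    have "\<exists>\<rho> \<in> ring_of_integers K. \<exists>r :: rat. r \<noteq> 0 \<and> u\<^sup>2 = \<rho>\<^sup>2 / of_rat r"
      by (intro bexI[OF _ uO] exI[of _ 1]) simp
    then have "u\<^sup>2 \<in> OK_star a b" using iff[OF U1] by blast
    moreover have "\<exists>\<rho> \<in> ring_of_integers K. \<exists>r :: rat. r \<noteq> 0 \<and> - (u\<^sup>2) = \<rho>\<^sup>2 / of_rat r"
      by (intro bexI[OF _ uO] exI[of _ "-1"]) (simp add: of_rat_minus)
    then have "- (u\<^sup>2) \<in> OK_star a b" using iff[OF U2] by blast
    ultimately show ?thesis by blast
  qed
  show ?thesis using iff[OF assms(6)] part2 by blast
qed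

end
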